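(* Let $(v,b)$ satisfy (C1), with associated pair $(\lambda,\varepsilon)$ (so $\varepsilon\in\{\pm1,\pm2\}$). Then every TS$(v;b)$ $(V,\mathcal F)$ satisfies $$\sum_{\{x,y\}\in\binom V2}\lambda_{x,y}^2\ \ge\ \binom v2\lambda^2+2\varepsilon\lambda+2+|\varepsilon|,$$ and equality holds for any TS$(v;b)$ satisfying one of: (i) all $\lambda_{x,y}\in\{\lambda-1,\lambda,\lambda+1\}$, and with $D_1=\{\{x,y\}:\lambda_{x,y}=\lambda+1\}$, $D_{-1}=\{\{x,y\}:\lambda_{x,y}=\lambda-1\}$ we have $(|D_1|,|D_{-1}|)=(1+\varepsilon,1)$ if $\varepsilon\in\{1,2\}$ and $(|D_1|,|D_{-1}|)=(1,1-\varepsilon)$ if $\varepsilon\in\{-1,-2\}$; or (ii) $\varepsilon\in\{\pm2\}$ and $\lambda_{x,y}=\lambda$ for all pairs except exactly one pair, for which $\lambda_{x,y}=\lambda+\varepsilon$.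
   Context: A triple system TS$(v;b)$ is a pair $(V,\mathcal F)$ where $V$ is a set of $v\ge 3$ points and $\mathcal F$ is a multiset of $b$ 3-subsets of $V$ (blocks); repeated blocks allowed. $\lambda_{x,y}$ is the number of blocks (with multiplicity) containing $\{x,y\}$. The associated pair $(\lambda,\varepsilon)$ of $(v,b)$: integers with $3b=\lambda\binom v2+\varepsilon$, $-v/2<\varepsilon<v/2$. (C1): $v\equiv 2\pmod 3$ and $b\in\{\lfloor \lambda v(v-1)/6\rfloor,\lceil \lambda v(v-1)/6\rceil\}$ for an integer $\lambda$ with $\lambda\equiv1,2\pmod 3$ if $v\equiv5\pmod6$ and $\lambda\equiv 2,4\pmod 6$ if $v\equiv2\pmod 6$; this $\lambda$ is the $\lambda$ of the associated pair. *)

theory Defs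
  imports Complex_Main "HOL-Library.Multiset"
begin

text \<open>A triple system TS(v;b): a finite point set V with at least 3 points and a
multiset F of 3-subsets of V (repeated blocks allowed). v = card V, b = size F.\<close>
definition TS :: "'a set \<Rightarrow> 'a set multiset \<Rightarrow> bool" where
  "TS V F \<longleftrightarrow> finite V \<and> card V \<ge> 3 \<and> (\<forall>B \<in># F. B \<subseteq> V \<and> card B = 3)"

definition pairs :: "'a set \<Rightarrow> 'a set set" where
  "pairs V = {P. P \<subseteq> V \<and> card P = 2}"

definition lam :: "'a set multiset \<Rightarrow> 'a set \<Rightarrow> int" where
  "lam F P = int (size (filter_mset (\<lambda>B. P \<subseteq> B) F))"

definition assoc_pair :: "nat \<Rightarrow> nat \<Rightarrow> int \<Rightarrow> int \<Rightarrow> bool" where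
  "assoc_pair v b l e \<longleftrightarrow> 3 * int b = l * int (v choose 2) + e \<and> - int v < 2 * e \<and> 2 * e < int v"

definition C1 :: "nat \<Rightarrow> nat \<Rightarrow> int \<Rightarrow> bool" where
  "C1 v b l \<longleftrightarrow> v mod 3 = 2 \<and>
     (int b = \<lfloor>real_of_int (l * int v * (int v - 1)) / 6\<rfloor> \<or>
      int b = \<lceil>real_of_int (l * int v * (int v - 1)) / 6\<rceil>) \<and>
     (v mod 6 = 5 \<longrightarrow> l mod 3 \<in> {1, 2}) \<and>
     (v mod 6 = 2 \<longrightarrow> l mod 6 \<in> {2, 4})"

end

theory Submission imports Defs begin

lemma sum_ind_card: "finite A \<Longrightarrow> (\<Sum>x\<in>A. if P x then 1 else 0 :: int) = int (card {x\<in>A. P x})"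
  by (simp add: sum.If_cases Int_def conj_commute)

lemma lam_add: "lam (add_mset B F) P = lam F P + (if P \<subseteq> B then 1 else 0)"
  by (simp add: lam_def)

lemma lam_empty: "lam {#} P = 0" by (simp add: lam_def)

lemma finite_pairs: "finite V \<Longrightarrow> finite (pairs V)"
  unfolding pairs_def by (rule finite_subset[of _ "Pow V"]) auto

lemma card_pairs: "finite V \<Longrightarrow> card (pairs V) = card V choose 2"
  unfolding pairs_def by (rule n_subsets)

lemma block_pairs:
  assumes "finite V" "B \<subseteq> V" "card B = 3"
  shows "(\<Sum>P\<in>pairs V. if P \<subseteq> B then 1 else 0 :: int) = 3"
proof -
  have fB: "finite B" using assms finite_subset by blast
  have "{P\<in>pairs V. P \<subseteq> B} = {P. P \<subseteq> B \<and> card P = 2}"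
    using assms(2) unfolding pairs_def by auto
  moreover have "card {P. P \<subseteq> B \<and> card P = 2} = 3"
    using n_subsets[OF fB, of 2] assms(3) by (simp add: choose_two)
  ultimately show ?thesis using sum_ind_card[OF finite_pairs[OF assms(1)]] by simp
qed

lemma sum_lam:
  assumes "finite V" "\<forall>B\<in>#F. B \<subseteq> V \<and> card B = 3"
  shows "(\<Sum>P\<in>pairs V. lam F P) = 3 * int (size F)"
  using assms(2)
proof (induction F)
  case empty
  then show ?case by (simp add: lam_empty)
next
  case (add B F)
  have "(\<Sum>P\<in>pairs V. lam (add_mset B F) P) = (\<Sum>P\<in>pairs V. lam F P) + (\<Sum>P\<in>pairs V. if P \<subseteq> B then 1 else 0)"
    by (simp add: lam_add sum.distrib)
  also have "\<dots> = 3 * int (size F) + 3" using add block_pairs[OF assms(1)] by simp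
  finally show ?case by simp
qed

lemma block_vertex:
  assumes "x \<in> V" "B \<subseteq> V" "card B = 3" "finite V"
  shows "(\<Sum>z\<in>V-{x}. if {x,z} \<subseteq> B then 1 else 0 :: int) = (if x \<in> B then 2 else 0)"
proof -
  have "(\<Sum>z\<in>V-{x}. if {x,z} \<subseteq> B then 1 else 0 :: int) = int (card {z\<in>V-{x}. {x,z} \<subseteq> B})"
    using assms(4) by (simp add: sum_ind_card)
  moreover have "{z\<in>V-{x}. {x,z} \<subseteq> B} = (if x \<in> B then B - {x} else {})"
    using assms(2) by auto
  moreover have "x \<in> B \<Longrightarrow> card (B - {x}) = 2" using assms(3) by (simp add: card_Diff_singleton)
  ultimately show ?thesis by auto
qed

lemma sum_vertex:
  assumes "finite V" "x \<in> V" "\<forall>B\<in>#F. B \<subseteq> V \<and> card B = 3"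
  shows "(\<Sum>z\<in>V-{x}. lam F {x,z}) = 2 * int (size (filter_mset (\<lambda>B. x \<in> B) F))"
  using assms(3)
proof (induction F)
  case empty
  then show ?case by (simp add: lam_empty)
next
  case (add B F)
  have "(\<Sum>z\<in>V-{x}. lam (add_mset B F) {x,z}) = (\<Sum>z\<in>V-{x}. lam F {x,z}) + (\<Sum>z\<in>V-{x}. if {x,z} \<subseteq> B then 1 else 0)"
    by (simp add: lam_add sum.distrib)
  also have "\<dots> = 2 * int (size (filter_mset (\<lambda>B. x \<in> B) F)) + (if x \<in> B then 2 else 0)"
    using add block_vertex[OF assms(2) _ _ assms(1), of B] by simp
  finally show ?case by simp
qed

lemma arith:
  assumes c1: "C1 v b l'" and ap: "assoc_pair v b l e" and v3: "v \<ge> 3"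
  shows "l = l' \<and> e \<noteq> 0 \<and> \<bar>e\<bar> \<le> 2 \<and> even ((int v - 1) * l)"
proof -
  define N where "N = int (v choose 2)"
  have v3m: "v mod 3 = 2" using c1 unfolding C1_def by simp
  have v5: "v \<ge> 5" using v3m v3 by presburger
  have vm: "v mod 6 = 2 \<or> v mod 6 = 5" using v3m by presburger
  have ev: "even (v * (v - 1))" by auto
  have N2: "2 * N = int v * (int v - 1)"
  proof -
    have "2 * (v choose 2) = v * (v - 1)" using ev by (simp add: choose_two)
    then show ?thesis unfolding N_def using v3 by (metis of_nat_1 of_nat_diff of_nat_mult of_nat_numeral le_trans one_le_numeral)
  qed
  define M where "M = l' * int v * (int v - 1)"
  have M: "M = 2 * l' * N" unfolding M_def
  proof -
    have "l' * int v * (int v - 1) = l' * (int v * (int v - 1))" by (simp add: mult.assoc)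
    also have "\<dots> = l' * (2 * N)" using N2 by simp
    finally show "l' * int v * (int v - 1) = 2 * l' * N" by simp
  qed
  have "6 * int b \<le> M \<and> M < 6 * int b + 6 \<or> 6 * int b - 6 < M \<and> M \<le> 6 * int b"
  proof -
    from c1 have "int b = \<lfloor>real_of_int M / 6\<rfloor> \<or> int b = \<lceil>real_of_int M / 6\<rceil>"
      unfolding C1_def M_def by simp
    then have "(real_of_int (int b) \<le> real_of_int M / 6 \<and> real_of_int M / 6 < real_of_int (int b) + 1) \<or>
       (real_of_int (int b) - 1 < real_of_int M / 6 \<and> real_of_int M / 6 \<le> real_of_int (int b))"
      by (metis floor_eq_iff ceiling_eq_iff)
    then have "(real_of_int (6 * int b) \<le> real_of_int M \<and> real_of_int M < real_of_int (6 * int b + 6)) \<or>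
       (real_of_int (6 * int b - 6) < real_of_int M \<and> real_of_int M \<le> real_of_int (6 * int b))"
      by auto
    then show ?thesis by (simp only: of_int_le_iff of_int_less_iff)
  qed
  then have e'b: "\<bar>3 * int b - l' * N\<bar> \<le> 2" using M by linarith
  have ap': "3 * int b = l * N + e" "- int v < 2 * e" "2 * e < int v"
    using ap unfolding assoc_pair_def N_def by auto
  have "int v * (int v - 1) \<ge> 4 * int v" using v5 mult_left_mono[of 4 "int v - 1" "int v"] by (simp add: mult.commute)
  then have Nv: "N \<ge> 2 * int v" using N2 by linarith
  have eq: "(l - l') * N = (3 * int b - l' * N) - e" using ap'(1) by (simp add: algebra_simps)
  have lt: "\<bar>(l - l') * N\<bar> < N" using eq e'b ap'(2,3) Nv v5 by linarith
  have ll: "l = l'"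
  proof (rule ccontr)
    assume "l \<noteq> l'"
    then have "\<bar>l - l'\<bar> \<ge> 1" by linarith
    then have "\<bar>l - l'\<bar> * N \<ge> 1 * N" using Nv by (intro mult_right_mono) auto
    then show False using lt Nv by (simp add: abs_mult)
  qed
  have eb: "\<bar>e\<bar> \<le> 2" using e'b ap'(1) ll by simp
  have l3: "l mod 3 \<noteq> 0"
  proof (cases "v mod 6 = 5")
    case True
    then have "l' mod 3 \<in> {1,2}" using c1 unfolding C1_def by blast
    then show ?thesis using ll by auto
  next
    case False
    then have "v mod 6 = 2" using vm by simp
    then have "l' mod 6 \<in> {2,4}" using c1 unfolding C1_def by blast
    then have "l' mod 6 = 2 \<or> l' mod 6 = 4" by simp
    then show ?thesis using ll by presburger
  qed
  obtain k where k: "v = 3 * k + 2" using c1 unfolding C1_def by (metis div_mult_mod_eq mult.commute)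
  have "2 * N = 9 * (int k * int k + int k) + 2" using N2 k by (simp add: algebra_simps)
  then have "N mod 3 = 1" by presburger
  then obtain j where j: "N = 3 * j + 1" by (metis div_mult_mod_eq mult.commute)
  have "e \<noteq> 0"
  proof
    assume "e = 0"
    then have "3 * int b = 3 * (l * j) + l" using ap'(1) j by (simp add: algebra_simps)
    then show False using l3 by presburger
  qed
  moreover have "even ((int v - 1) * l)"
  proof (cases "v mod 6 = 5")
    case True
    then have "even (int v - 1)" by presburger
    then show ?thesis by simp
  next
    case False
    then have "v mod 6 = 2" using vm by simp
    then have "l mod 6 \<in> {2,4}" using c1 ll unfolding C1_def by auto
    then have "l mod 6 = 2 \<or> l mod 6 = 4" by simp
    then have "even l" by presburger
    then show ?thesis by simp
  qed
  ultimately show ?thesis using ll eb by simp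
qed

lemma sum_const_if: "finite A \<Longrightarrow> (\<Sum>x\<in>A. if P x then c else 0 :: int) = c * int (card {x\<in>A. P x})"
proof -
  assume fA: "finite A"
  have "(\<Sum>x\<in>A. if P x then c else 0 :: int) = (\<Sum>x\<in>A. c * (if P x then 1 else 0))"
    by (rule sum.cong) auto
  also have "\<dots> = c * (\<Sum>x\<in>A. if P x then 1 else 0)" by (simp add: sum_distrib_left)
  finally show ?thesis using sum_ind_card[OF fA, of P] by simp
qed

theorem lemma2p1:
  fixes V :: "'a set" and F :: "'a set multiset" and l' l e :: int
  assumes c1: "C1 (card V) (size F) l'"
    and ap: "assoc_pair (card V) (size F) l e"
    and ts: "TS V F"
  shows "(\<Sum>P\<in>pairs V. (lam F P)\<^sup>2)
           \<ge> int (card V choose 2) * l\<^sup>2 + 2 * e * l + 2 + \<bar>e\<bar> \<and>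
        (((\<forall>P\<in>pairs V. lam F P \<in> {l - 1, l, l + 1}) \<and>
          (e \<in> {1, 2} \<longrightarrow>
             card {P\<in>pairs V. lam F P = l + 1} = nat (1 + e) \<and>
             card {P\<in>pairs V. lam F P = l - 1} = 1) \<and>
          (e \<in> {-1, -2} \<longrightarrow>
             card {P\<in>pairs V. lam F P = l + 1} = 1 \<and>
             card {P\<in>pairs V. lam F P = l - 1} = nat (1 - e)))
         \<or> (e \<in> {2, -2} \<and>
            (\<exists>P0\<in>pairs V. lam F P0 = l + e \<and>
               (\<forall>P\<in>pairs V. P \<noteq> P0 \<longrightarrow> lam F P = l)))
         \<longrightarrow> (\<Sum>P\<in>pairs V. (lam F P)\<^sup>2)
               = int (card V choose 2) * l\<^sup>2 + 2 * e * l + 2 + \<bar>e\<bar>)"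
proof -
  have fV: "finite V" and v3: "card V \<ge> 3" and blk: "\<forall>B\<in>#F. B \<subseteq> V \<and> card B = 3"
    using ts unfolding TS_def by auto
  have ar: "l = l' \<and> e \<noteq> 0 \<and> \<bar>e\<bar> \<le> 2 \<and> even ((int (card V) - 1) * l)"
    using arith[OF c1 ap v3] .
  define N where "N = int (card V choose 2)"
  have fP: "finite (pairs V)" using finite_pairs[OF fV] .
  have cP: "int (card (pairs V)) = N" unfolding N_def using card_pairs[OF fV] by simp
  define d where "d P = lam F P - l" for P
  have sl: "(\<Sum>P\<in>pairs V. lam F P) = l * N + e"
    using sum_lam[OF fV blk] ap unfolding assoc_pair_def N_def by simp
  have sd: "(\<Sum>P\<in>pairs V. d P) = e"
    unfolding d_def using sl cP by (simp add: sum_subtractf)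
  have key: "(\<Sum>P\<in>pairs V. (lam F P)\<^sup>2) = N * l\<^sup>2 + 2 * e * l + (\<Sum>P\<in>pairs V. (d P)\<^sup>2)"
  proof -
    have "(\<Sum>P\<in>pairs V. (lam F P)\<^sup>2) = (\<Sum>P\<in>pairs V. l\<^sup>2 + 2 * l * d P + (d P)\<^sup>2)"
      by (rule sum.cong) (auto simp: d_def power2_eq_square algebra_simps)
    also have "\<dots> = N * l\<^sup>2 + 2 * l * (\<Sum>P\<in>pairs V. d P) + (\<Sum>P\<in>pairs V. (d P)\<^sup>2)"
      using cP by (simp add: sum.distrib sum_distrib_left)
    finally show ?thesis using sd by (simp add: algebra_simps)
  qed
  define s :: int where "s = sgn e"
  have s1: "s = 1 \<or> s = -1" using ar unfolding s_def by (auto simp: sgn_if)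
  have se: "s * e = \<bar>e\<bar>" unfolding s_def by (simp add: abs_sgn)
  define Q where "Q = (\<Sum>P\<in>pairs V. d P * (d P - s))"
  have QQ: "Q = (\<Sum>P\<in>pairs V. (d P)\<^sup>2) - \<bar>e\<bar>"
  proof -
    have "Q = (\<Sum>P\<in>pairs V. (d P)\<^sup>2) - s * (\<Sum>P\<in>pairs V. d P)"
      unfolding Q_def by (simp add: sum_subtractf sum_distrib_left power2_eq_square algebra_simps)
    then show ?thesis using sd se by simp
  qed
  have tnn: "d P * (d P - s) \<ge> 0" for P
  proof -
    consider "d P \<ge> 1" | "d P = 0" | "d P \<le> -1" by linarith
    then show ?thesis
    proof cases
      case 1 then show ?thesis using s1 by (intro mult_nonneg_nonneg) auto
    next
      case 2 then show ?thesis by simp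
    next
      case 3 then show ?thesis using s1 by (intro mult_nonpos_nonpos) auto
    qed
  qed
  have tev: "even (d P * (d P - s))" for P
    using s1 by (cases "even (d P)") auto
  have Qnn: "Q \<ge> 0" unfolding Q_def using tnn by (simp add: sum_nonneg)
  have Qev: "even Q" unfolding Q_def using tev by (simp add: dvd_sum)
  have Q0: "Q \<noteq> 0"
  proof
    assume "Q = 0"
    then have z: "\<forall>P\<in>pairs V. d P * (d P - s) = 0"
      using sum_nonneg_eq_0_iff[OF fP, of "\<lambda>P. d P * (d P - s)"] tnn unfolding Q_def by auto
    have ds: "P \<in> pairs V \<Longrightarrow> d P = (if d P \<noteq> 0 then s else 0)" for P using z by auto
    define S where "S = {P\<in>pairs V. d P \<noteq> 0}"
    have fS: "finite S" unfolding S_def using fP by simp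
    have "e = s * int (card S)"
    proof -
      have "(\<Sum>P\<in>pairs V. d P) = (\<Sum>P\<in>pairs V. if d P \<noteq> 0 then s else 0)"
        by (rule sum.cong[OF refl]) (rule ds)
      then have "e = (\<Sum>P\<in>pairs V. if d P \<noteq> 0 then s else 0)" using sd by simp
      then show ?thesis unfolding S_def using sum_const_if[OF fP] by simp
    qed
    then have cS: "int (card S) = \<bar>e\<bar>" using se s1 by auto
    then have cS2: "card S \<le> 2" "card S \<ge> 1" using ar by auto
    have vert: "even (card {z\<in>V-{x}. {x,z} \<in> S})" if xV: "x \<in> V" for x
    proof -
      have fVx: "finite (V - {x})" using fV by simp
      have pz: "z \<in> V - {x} \<Longrightarrow> {x,z} \<in> pairs V" for z using xV unfolding pairs_def by auto
      have "(\<Sum>z\<in>V-{x}. d {x,z}) = (\<Sum>z\<in>V-{x}. if {x,z} \<in> S then s else 0)"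
        by (rule sum.cong) (use ds pz in \<open>auto simp: S_def\<close>)
      also have "\<dots> = s * int (card {z\<in>V-{x}. {x,z} \<in> S})" using sum_const_if[OF fVx] by simp
      finally have A: "(\<Sum>z\<in>V-{x}. d {x,z}) = s * int (card {z\<in>V-{x}. {x,z} \<in> S})" .
      have "(\<Sum>z\<in>V-{x}. d {x,z}) = (\<Sum>z\<in>V-{x}. lam F {x,z}) - int (card (V - {x})) * l"
        unfolding d_def by (simp add: sum_subtractf)
      also have "\<dots> = 2 * int (size (filter_mset (\<lambda>B. x \<in> B) F)) - (int (card V) - 1) * l"
        using sum_vertex[OF fV xV blk] xV fV v3 by (simp add: card_Diff_singleton of_nat_diff)
      finally have A2: "(\<Sum>z\<in>V-{x}. d {x,z}) = 2 * int (size (filter_mset (\<lambda>B. x \<in> B) F)) - (int (card V) - 1) * l" .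
      have ev2: "even ((int (card V) - 1) * l)" using ar by blast
      have "even (\<Sum>z\<in>V-{x}. d {x,z})" unfolding A2 by (rule dvd_diff[OF _ ev2]) simp
      then have "even (s * int (card {z\<in>V-{x}. {x,z} \<in> S}))" using A by simp
      then show ?thesis using s1 by auto
    qed
    have oth: "\<exists>z. z \<in> V - {x} \<and> z \<noteq> y \<and> {x,z} \<in> S" if "x \<in> V" "y \<in> V - {x}" "{x,y} \<in> S" for x y
    proof (rule ccontr)
      assume "\<not> ?thesis"
      then have "{z\<in>V-{x}. {x,z} \<in> S} = {y}" using that by auto
      then show False using vert[OF that(1)] by simp
    qed
    obtain P where PS: "P \<in> S" using cS2 card_gt_0_iff by fastforce
    then have "P \<in> pairs V" unfolding S_def by simp
    then obtain x y where xy: "P = {x,y}" "x \<noteq> y" "x \<in> V" "y \<in> V"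
      unfolding pairs_def by (auto simp: card_2_iff)
    obtain z where z: "z \<in> V - {x}" "z \<noteq> y" "{x,z} \<in> S" using oth[of x y] xy PS by auto
    obtain w where w: "w \<in> V - {y}" "w \<noteq> x" "{y,w} \<in> S" using oth[of y x] xy PS by (auto simp: insert_commute)
    have "{{x,y},{x,z},{y,w}} \<subseteq> S" using z w xy PS by auto
    then have "card {{x,y},{x,z},{y,w}} \<le> card S" using fS card_mono by blast
    moreover have "card {{x,y},{x,z},{y,w}} = 3" using z w xy by (auto simp: doubleton_eq_iff)
    ultimately show False using cS2 by simp
  qed
  have ineq: "(\<Sum>P\<in>pairs V. (d P)\<^sup>2) \<ge> 2 + \<bar>e\<bar>"
  proof -
    have "Q \<ge> 2" using Qnn Qev Q0 by presburger
    then show ?thesis using QQ by simp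
  qed
  have eqc: "(\<Sum>P\<in>pairs V. (d P)\<^sup>2) = 2 + \<bar>e\<bar>"
    if H: "((\<forall>P\<in>pairs V. lam F P \<in> {l - 1, l, l + 1}) \<and>
          (e \<in> {1, 2} \<longrightarrow>
             card {P\<in>pairs V. lam F P = l + 1} = nat (1 + e) \<and>
             card {P\<in>pairs V. lam F P = l - 1} = 1) \<and>
          (e \<in> {-1, -2} \<longrightarrow>
             card {P\<in>pairs V. lam F P = l + 1} = 1 \<and>
             card {P\<in>pairs V. lam F P = l - 1} = nat (1 - e)))
         \<or> (e \<in> {2, -2} \<and>
            (\<exists>P0\<in>pairs V. lam F P0 = l + e \<and>
               (\<forall>P\<in>pairs V. P \<noteq> P0 \<longrightarrow> lam F P = l)))"
  proof -
    have ecases: "e \<in> {1,2} \<or> e \<in> {-1,-2}" using ar by auto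
    from H show ?thesis
    proof
      assume H1: "(\<forall>P\<in>pairs V. lam F P \<in> {l - 1, l, l + 1}) \<and>
          (e \<in> {1, 2} \<longrightarrow>
             card {P\<in>pairs V. lam F P = l + 1} = nat (1 + e) \<and>
             card {P\<in>pairs V. lam F P = l - 1} = 1) \<and>
          (e \<in> {-1, -2} \<longrightarrow>
             card {P\<in>pairs V. lam F P = l + 1} = 1 \<and>
             card {P\<in>pairs V. lam F P = l - 1} = nat (1 - e))"
      have "(\<Sum>P\<in>pairs V. (d P)\<^sup>2) = (\<Sum>P\<in>pairs V. (if lam F P = l + 1 then 1 else 0) + (if lam F P = l - 1 then 1 else 0))"
        by (rule sum.cong) (use H1 in \<open>auto simp: d_def\<close>)
      also have "\<dots> = int (card {P\<in>pairs V. lam F P = l + 1}) + int (card {P\<in>pairs V. lam F P = l - 1})"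
        by (simp add: sum.distrib sum_ind_card[OF fP])
      finally show ?thesis using H1 ecases by auto
    next
      assume H2: "e \<in> {2, -2} \<and>
            (\<exists>P0\<in>pairs V. lam F P0 = l + e \<and>
               (\<forall>P\<in>pairs V. P \<noteq> P0 \<longrightarrow> lam F P = l))"
      then obtain P0 where P0: "P0 \<in> pairs V" "lam F P0 = l + e" "\<forall>P\<in>pairs V. P \<noteq> P0 \<longrightarrow> lam F P = l"
        by blast
      have "(\<Sum>P\<in>pairs V. (d P)\<^sup>2) = (d P0)\<^sup>2 + (\<Sum>P\<in>pairs V - {P0}. (d P)\<^sup>2)"
        using sum.remove[OF fP P0(1)] .
      also have "(\<Sum>P\<in>pairs V - {P0}. (d P)\<^sup>2) = 0"
        using P0(3) by (simp add: d_def)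
      finally show ?thesis using P0(2) H2 by (auto simp: d_def)
    qed
  qed
  show ?thesis using key ineq eqc unfolding N_def by auto
qed

end
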